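(* Let $G$ be a finite simple graph on $n\geq 2$ vertices. Then $\mathrm{nRel}(G;p)$ is concave down for $p$ sufficiently close to $0$; that is, there is $\varepsilon>0$ such that $\frac{d^2}{dp^2}\mathrm{nRel}(G;p)<0$ for all $p\in(0,\varepsilon)$.
   Context: For a graph $G$ on $n$ vertices, a connected set is a nonempty vertex subset $C$ such that the induced subgraph $G[C]$ is connected. The node reliability of $G$ is the polynomial \[ \mathrm{nRel}(G;p)=\sum_{C}p^{|C|}(1-p)^{n-|C|}, \] the sum over all connected sets $C$ of $G$. *)

theory Defs
  imports "HOL-Analysis.Analysis"
begin

definition simple_graph :: "'a set \<Rightarrow> ('a \<Rightarrow> 'a \<Rightarrow> bool) \<Rightarrow> bool" where
  "simple_graph V E \<longleftrightarrow> finite V \<and> (\<forall>x y. E x y \<longrightarrow> x \<in> V \<and> y \<in> V)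
     \<and> (\<forall>x y. E x y \<longrightarrow> E y x) \<and> (\<forall>x. \<not> E x x)"

definition induced_connected :: "('a \<Rightarrow> 'a \<Rightarrow> bool) \<Rightarrow> 'a set \<Rightarrow> bool" where
  "induced_connected E C \<longleftrightarrow>
     (\<forall>x\<in>C. \<forall>y\<in>C. (\<lambda>u v. u \<in> C \<and> v \<in> C \<and> E u v)\<^sup>*\<^sup>* x y)"

definition connected_set :: "'a set \<Rightarrow> ('a \<Rightarrow> 'a \<Rightarrow> bool) \<Rightarrow> 'a set \<Rightarrow> bool" where
  "connected_set V E C \<longleftrightarrow> C \<noteq> {} \<and> C \<subseteq> V \<and> induced_connected E C"

definition nRel :: "'a set \<Rightarrow> ('a \<Rightarrow> 'a \<Rightarrow> bool) \<Rightarrow> real \<Rightarrow> real" where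
  "nRel V E p = (\<Sum>C\<in>{C. connected_set V E C}. p ^ card C * (1 - p) ^ (card V - card C))"

end

theory Submission
  imports Defs
begin

definition h1 :: "nat \<Rightarrow> nat \<Rightarrow> real \<Rightarrow> real" where
  "h1 k j p = real k * p^(k-1) * (1-p)^j - real j * p^k * (1-p)^(j-1)"

definition h2 :: "nat \<Rightarrow> nat \<Rightarrow> real \<Rightarrow> real" where
  "h2 k j p = real k * (real (k-1) * p^(k-2) * (1-p)^j - p^(k-1) * real j * (1-p)^(j-1))
      - real j * (real k * p^(k-1) * (1-p)^(j-1) - p^k * real (j-1) * (1-p)^(j-2))"

lemma d1: "((\<lambda>p. p^k * (1-p)^j) has_field_derivative h1 k j p) (at p)"
  unfolding h1_def
  by (auto intro!: derivative_eq_intros simp: algebra_simps)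

lemma d2: "((h1 k j) has_field_derivative h2 k j p) (at p)"
  unfolding h1_def[abs_def] h2_def
  by (auto intro!: derivative_eq_intros simp: algebra_simps diff_diff_add numeral_2_eq_2)

lemma cont_h2: "continuous_on UNIV (h2 k j)"
  unfolding h2_def by (intro continuous_intros)

lemma h2_0: "h2 k j 0 = (if k = 0 then real j * (real j - 1) else if k = 1 then - 2 * real j
   else if k = 2 then 2 else 0)"
proof -
  consider "k = 0" | "k = 1" | "k = 2" | "k \<ge> 3" by linarith
  then show ?thesis
  proof cases
    case 4
    then have z: "(0::real)^(k-2) = 0" "(0::real)^(k-1) = 0" "(0::real)^k = 0" "(0::real)^(k - Suc 0) = 0" by auto
    have "h2 k j 0 = 0" unfolding h2_def z by (simp only: mult_zero_left mult_zero_right diff_zero)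
    then show ?thesis using 4 by simp
  qed (cases j; auto simp: h2_def numeral_2_eq_2 of_nat_diff)+
qed

theorem lemma3p1:
  fixes V :: "'a set" and E :: "'a \<Rightarrow> 'a \<Rightarrow> bool"
  assumes "simple_graph V E" and "card V \<ge> 2"
  shows "\<exists>\<epsilon>>0. \<forall>p. 0 < p \<and> p < \<epsilon> \<longrightarrow> deriv (deriv (nRel V E)) p < 0"
proof -
  define S where "S = {C. connected_set V E C}"
  define n where "n = card V"
  have finV: "finite V" using assms(1) unfolding simple_graph_def by auto
  have finS: "finite S"
    by (rule finite_subset[of _ "Pow V"]) (auto simp: S_def connected_set_def finV)
  have f: "nRel V E = (\<lambda>p. \<Sum>C\<in>S. p ^ card C * (1 - p) ^ (n - card C))"
    by (auto simp: nRel_def S_def n_def)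
  have D1: "deriv (nRel V E) = (\<lambda>p. \<Sum>C\<in>S. h1 (card C) (n - card C) p)"
    unfolding f by (rule ext, rule DERIV_imp_deriv, rule DERIV_sum, rule d1)
  define g where "g = (\<lambda>p. \<Sum>C\<in>S. h2 (card C) (n - card C) p)"
  have D2: "deriv (deriv (nRel V E)) = g"
    unfolding D1 g_def by (rule ext, rule DERIV_imp_deriv, rule DERIV_sum, rule d2)
  have cg: "isCont g 0"
  proof -
    have "continuous_on UNIV g" unfolding g_def
      by (intro continuous_on_sum) (rule cont_h2)
    then show ?thesis by (simp add: continuous_on_eq_continuous_at)
  qed
  define S1 where "S1 = {C\<in>S. card C = 1}"
  define S2 where "S2 = {C\<in>S. card C = 2}"
  have g0: "g 0 = (\<Sum>C\<in>S. (if card C = 1 then - 2 * real (n - 1) else 0))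
       + (\<Sum>C\<in>S. (if card C = 2 then 2 else 0))"
  proof -
    have "g 0 = (\<Sum>C\<in>S. (if card C = 1 then - 2 * real (n - 1) else 0)
       + (if card C = 2 then 2 else 0))"
      unfolding g_def
    proof (rule sum.cong[OF refl])
      fix C assume "C \<in> S"
      then have "C \<noteq> {}" "C \<subseteq> V" by (auto simp: S_def connected_set_def)
      then have "card C \<noteq> 0" "card C \<le> n" using finV n_def
        by (auto simp: card_mono finite_subset)
      then show "h2 (card C) (n - card C) 0 = (if card C = 1 then - 2 * real (n - 1) else 0)
       + (if card C = 2 then 2 else 0)"
        by (auto simp: h2_0)
    qed
    then show ?thesis by (simp add: sum.distrib)
  qed
  have gen: "\<And>c P. (\<Sum>C\<in>S. if P C then c else 0) = (c::real) * card {C\<in>S. P C}"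
  proof -
    fix c :: real and P :: "'a set \<Rightarrow> bool"
    have "(\<Sum>C\<in>S. if P C then c else 0) = (\<Sum>C\<in>{C\<in>S. P C}. c)"
      by (rule sum.inter_filter[OF finS, symmetric])
    then show "(\<Sum>C\<in>S. if P C then c else 0) = c * card {C\<in>S. P C}" by simp
  qed
  have s1: "(\<Sum>C\<in>S. (if card C = 1 then - 2 * real (n - 1) else 0)) = - 2 * real (n-1) * card S1"
    unfolding S1_def gen by simp
  have s2: "(\<Sum>C\<in>S. (if card C = 2 then 2 else 0)) = (2::real) * card S2"
    unfolding S2_def gen by simp
  have S1eq: "S1 = (\<lambda>v. {v}) ` V"
  proof
    show "S1 \<subseteq> (\<lambda>v. {v}) ` V"
      by (auto simp: S1_def S_def connected_set_def card_1_singleton_iff)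
    show "(\<lambda>v. {v}) ` V \<subseteq> S1"
      by (auto simp: S1_def S_def connected_set_def induced_connected_def)
  qed
  have cS1: "card S1 = n" unfolding S1eq n_def
    by (rule card_image) (auto simp: inj_on_def)
  have "S2 \<subseteq> {B. B \<subseteq> V \<and> card B = 2}"
    by (auto simp: S2_def S_def connected_set_def)
  then have "card S2 \<le> card {B. B \<subseteq> V \<and> card B = 2}"
    by (rule card_mono[rotated]) (auto intro: finite_subset[of _ "Pow V"] simp: finV)
  also have "\<dots> = n choose 2" using n_subsets[OF finV] n_def by simp
  finally have "2 * card S2 \<le> 2 * (n * (n - 1) div 2)" by (simp add: choose_two)
  also have "\<dots> \<le> n * (n - 1)" by simp
  finally have "real (2 * card S2) \<le> real (n * (n - 1))" by (simp only: of_nat_le_iff)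
  then have cS2: "2 * real (card S2) \<le> real n * (real n - 1)"
    using assms(2) n_def by (simp add: of_nat_diff)
  have n2: "real n \<ge> 2" using assms(2) n_def by simp
  have "g 0 \<le> - 2 * (real n - 1) * real n + real n * (real n - 1)"
    using g0 s1 s2 cS1 cS2 n2 by (simp add: of_nat_diff)
  also have "\<dots> = - (real n * (real n - 1))" by (simp add: algebra_simps)
  also have "\<dots> < 0" using n2 by (simp add: mult_pos_pos)
  finally have "g 0 < 0" .
  then have "eventually (\<lambda>x. g x < 0) (at 0)"
    using cg unfolding isCont_def by (simp add: order_tendsto_iff)
  then obtain d where d: "d > 0" "\<And>x. x \<noteq> 0 \<Longrightarrow> dist x 0 < d \<Longrightarrow> g x < (0::real)"
    unfolding eventually_at by blast
  show ?thesis unfolding D2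
    using d by (intro exI[of _ d]) auto
qed

end
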